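(* Let $p,q$ be positive integers and $\mathbf{C}=\begin{bmatrix}1 & p\\ q & 1+pq\end{bmatrix}$. For each positive integer $e$ let $T_e$ be the least period of the Cat map over $\mathbb{Z}_{2^e}$. Then there exists a positive integer $e_s$ such that $T_{e+l}=2^l\cdot T_e$ for every integer $e\ge e_s$ and every non-negative integer $l$.
   Context: For a positive integer $N$, the Cat map over $\mathbb{Z}_N$ is the map $\mathbb{Z}_N^2\to\mathbb{Z}_N^2$, $v\mapsto \mathbf{C}v \bmod N$. Its least period is the least positive integer $n$ such that $\mathbf{C}^n v\equiv v \pmod N$ for all $v\in\mathbb{Z}_N^2$. *)

theory Defs
  imports Main
begin

text \<open>The Cat map over Z_N: v \<mapsto> C v mod N with C = [[1, p], [q, 1 + p q]].
  Elements of Z_N^2 are represented by pairs of naturals in {0..<N}.\<close>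
definition cat_map :: "nat \<Rightarrow> nat \<Rightarrow> nat \<Rightarrow> nat \<times> nat \<Rightarrow> nat \<times> nat" where
  "cat_map p q N v = ((fst v + p * snd v) mod N, (q * fst v + (1 + p * q) * snd v) mod N)"

definition cat_period :: "nat \<Rightarrow> nat \<Rightarrow> nat \<Rightarrow> nat" where
  "cat_period p q N = (LEAST n. 0 < n \<and>
      (\<forall>v \<in> {0..<N} \<times> {0..<N}. (cat_map p q N ^^ n) v = v))"

end

theory Submission
  imports Defs "HOL-Number_Theory.Number_Theory"
begin

datatype m2 = M2 nat nat nat nat

fun mm :: "m2 \<Rightarrow> m2 \<Rightarrow> m2" where
  "mm (M2 a b c d) (M2 e f g h) = M2 (a*e+b*g) (a*f+b*h) (c*e+d*g) (c*f+d*h)"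

definition I2 :: m2 where "I2 = M2 1 0 0 1"

fun powm :: "m2 \<Rightarrow> nat \<Rightarrow> m2" where
  "powm A 0 = I2"
| "powm A (Suc n) = mm A (powm A n)"

definition Cm :: "nat \<Rightarrow> nat \<Rightarrow> m2" where "Cm p q = M2 1 p q (1+p*q)"

fun mcong :: "nat \<Rightarrow> m2 \<Rightarrow> m2 \<Rightarrow> bool" where
  "mcong N (M2 a b c d) (M2 a' b' c' d') =
     ([a = a'] (mod N) \<and> [b = b'] (mod N) \<and> [c = c'] (mod N) \<and> [d = d'] (mod N))"

fun app :: "m2 \<Rightarrow> nat \<times> nat \<Rightarrow> nat \<times> nat" where
  "app (M2 a b c d) (x, y) = (a*x+b*y, c*x+d*y)"

lemma mm_assoc: "mm (mm A B) C = mm A (mm B C)"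
  by (cases A; cases B; cases C) (simp add: algebra_simps)

lemma mm_I: "mm I2 A = A" "mm A I2 = A"
  by (cases A; simp add: I2_def)+

lemma powm_add: "powm A (m+n) = mm (powm A m) (powm A n)"
  by (induction m) (simp_all add: mm_I mm_assoc)

lemma mcong_refl: "mcong N A A"
  by (cases A) simp

lemma mcong_sym: "mcong N A B \<Longrightarrow> mcong N B A"
  by (cases A; cases B) (auto simp: cong_sym)

lemma mcong_trans: "mcong N A B \<Longrightarrow> mcong N B C \<Longrightarrow> mcong N A C"
  by (cases A; cases B; cases C) (auto elim: cong_trans)

lemma mcong_mm: "mcong N A A' \<Longrightarrow> mcong N B B' \<Longrightarrow> mcong N (mm A B) (mm A' B')"
  by (cases A; cases B; cases A'; cases B') (auto intro!: cong_add cong_mult)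

lemma mcong_powm: "mcong N A A' \<Longrightarrow> mcong N (powm A n) (powm A' n)"
  by (induction n) (auto intro: mcong_mm mcong_refl)

lemma mcong_dvd: "mcong N A B \<Longrightarrow> M dvd N \<Longrightarrow> mcong M A B"
  by (cases A; cases B) (auto intro: cong_dvd_modulus_nat)

lemma app_mm: "app (mm A B) v = app A (app B v)"
  by (cases A; cases B; cases v) (simp add: algebra_simps)

lemma funpow_cat:
  assumes "v \<in> {0..<N} \<times> {0..<N}"
  shows "(cat_map p q N ^^ n) v = (fst (app (powm (Cm p q) n) v) mod N, snd (app (powm (Cm p q) n) v) mod N)"
proof (induction n)
  case 0
  then show ?case using assms by (cases v) (auto simp: I2_def)
next
  case (Suc n)
  obtain X Y where XY: "app (powm (Cm p q) n) v = (X, Y)" by force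
  have "(cat_map p q N ^^ Suc n) v = cat_map p q N (X mod N, Y mod N)"
    using Suc XY by simp
  also have "\<dots> = ((X + p*Y) mod N, (q*X + (1+p*q)*Y) mod N)"
  proof -
    have e1: "[X mod N + p*(Y mod N) = X + p*Y] (mod N)"
      by (intro cong_add cong_mult cong_refl) (simp_all add: cong_def)
    have e2: "[q*(X mod N) + (1+p*q)*(Y mod N) = q*X + (1+p*q)*Y] (mod N)"
      by (intro cong_add cong_mult cong_refl) (simp_all add: cong_def)
    show ?thesis using e1 e2 unfolding cat_map_def cong_def by simp
  qed
  also have "\<dots> = (fst (app (powm (Cm p q) (Suc n)) v) mod N, snd (app (powm (Cm p q) (Suc n)) v) mod N)"
    using XY by (simp add: app_mm Cm_def)
  finally show ?case .
qed

lemma good_iff: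
  assumes "2 \<le> N"
  shows "(\<forall>v \<in> {0..<N} \<times> {0..<N}. (cat_map p q N ^^ n) v = v) \<longleftrightarrow> mcong N (powm (Cm p q) n) I2"
proof -
  obtain a b c d where A: "powm (Cm p q) n = M2 a b c d" by (cases "powm (Cm p q) n") auto
  show ?thesis
  proof
    assume H: "\<forall>v \<in> {0..<N} \<times> {0..<N}. (cat_map p q N ^^ n) v = v"
    have r1: "(1,0) \<in> {0..<N} \<times> {0..<N}" and r2: "(0,1) \<in> {0..<N} \<times> {0..<N}"
      using assms by auto
    have "(cat_map p q N ^^ n) (1,0) = (1,0)" "(cat_map p q N ^^ n) (0,1) = (0,1)"
      using H r1 r2 by blast+
    then have "a mod N = 1" "c mod N = 0" "b mod N = 0" "d mod N = 1"
      unfolding funpow_cat[OF r1] funpow_cat[OF r2] by (simp_all add: A)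
    then show "mcong N (powm (Cm p q) n) I2" using assms
      by (simp add: A I2_def cong_def)
  next
    assume "mcong N (powm (Cm p q) n) I2"
    then have h: "[a = 1] (mod N)" "[b = 0] (mod N)" "[c = 0] (mod N)" "[d = 1] (mod N)"
      by (simp_all add: A I2_def)
    show "\<forall>v \<in> {0..<N} \<times> {0..<N}. (cat_map p q N ^^ n) v = v"
    proof
      fix v assume v: "v \<in> {0..<N} \<times> {0..<N}"
      obtain x y where xy: "v = (x, y)" by force
      have "[a*x + b*y = 1*x + 0*y] (mod N)" "[c*x + d*y = 0*x + 1*y] (mod N)"
        by (intro cong_add cong_mult h cong_refl)+
      then show "(cat_map p q N ^^ n) v = v"
        using v unfolding funpow_cat[OF v] by (simp add: A xy cong_def)
    qed
  qed
qed


lemma L1: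
  fixes a m :: nat
  assumes "2 \<le> m"
  shows "[a = 1] (mod m) \<longleftrightarrow> (\<exists>x. a = 1 + m*x)"
proof
  assume "[a = 1] (mod m)"
  then have "a mod m = 1" using assms by (simp add: cong_def)
  then have "a = 1 + m * (a div m)" by (metis add.commute div_mult_mod_eq mult.commute)
  then show "\<exists>x. a = 1 + m*x" by blast
next
  assume "\<exists>x. a = 1 + m*x"
  then obtain x where "a = 1 + m*x" by blast
  then show "[a = 1] (mod m)" by (simp only:) (subst cong_add_lcancel_0_nat, simp add: cong_0_iff)
qed

lemma L0: "[b = (0::nat)] (mod m) \<longleftrightarrow> (\<exists>y. b = m*y)"
  by (auto simp: cong_0_iff)

lemma L2: "[1 + 2^e*x = (1::nat)] (mod 2^(e+1)) \<longleftrightarrow> even x"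
  by (subst cong_add_lcancel_0_nat) (simp add: cong_0_iff)

lemma L4: "[1 + m*x = (1::nat)] (mod m)"
  by (subst cong_add_lcancel_0_nat) (simp add: cong_0_iff)

lemma L3: "[2^e*x = (0::nat)] (mod 2^(e+1)) \<longleftrightarrow> even x"
  by (simp add: cong_0_iff)

lemma form_cong: "mcong m (M2 (1+m*x) (m*y) (m*z) (1+m*w)) I2"
  unfolding I2_def mcong.simps by (intro conjI L4) (simp_all add: cong_0_iff)

lemma sq_form:
  assumes "e \<ge> 1" "A = M2 (1+2^e*x) (2^e*y) (2^e*z) (1+2^e*w)"
  shows "mm A A = M2 (1+2^(e+1)*(x + 2^(e-1)*(x*x+y*z))) (2^(e+1)*(y*(1+2^(e-1)*(x+w))))
     (2^(e+1)*(z*(1+2^(e-1)*(x+w)))) (1+2^(e+1)*(w+2^(e-1)*(w*w+y*z)))"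
proof -
  obtain f where f: "e = Suc f" using assms(1) by (cases e) auto
  define t :: nat where "t = 2^f"
  have "2^e = 2*t" "2^(e+1) = 4*t" "2^(e-1) = t" by (simp_all add: f t_def)
  then show ?thesis using assms(2) by (simp add: algebra_simps)
qed

definition Q :: "nat \<Rightarrow> m2 \<Rightarrow> bool" where
  "Q e A \<longleftrightarrow> (\<exists>x y z w. A = M2 (1+2^e*x) (2^e*y) (2^e*z) (1+2^e*w) \<and> (odd x \<or> odd y \<or> odd z \<or> odd w))"

lemma Q_iff:
  assumes "e \<ge> 1"
  shows "Q e A \<longleftrightarrow> mcong (2^e) A I2 \<and> \<not> mcong (2^(e+1)) A I2"
proof -
  have m2: "(2::nat) \<le> 2^e" using assms by (metis power_one_right power_increasing_iff one_less_numeral_iff semiring_norm(76) )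
  obtain a b c d where A: "A = M2 a b c d" by (cases A) auto
  show ?thesis
  proof
    assume "Q e A"
    then obtain x y z w where h: "A = M2 (1+2^e*x) (2^e*y) (2^e*z) (1+2^e*w)" "odd x \<or> odd y \<or> odd z \<or> odd w"
      unfolding Q_def by blast
    show "mcong (2^e) A I2 \<and> \<not> mcong (2^(e+1)) A I2"
      using h(2) form_cong[of "2^e" x y z w] unfolding h(1) I2_def mcong.simps L2 L3 by blast
  next
    assume h: "mcong (2^e) A I2 \<and> \<not> mcong (2^(e+1)) A I2"
    then have "[a = 1] (mod 2^e)" "[b = 0] (mod 2^e)" "[c = 0] (mod 2^e)" "[d = 1] (mod 2^e)"
      by (simp_all add: A I2_def)
    then obtain x y z w where xyzw: "a = 1+2^e*x" "b = 2^e*y" "c = 2^e*z" "d = 1+2^e*w"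
      unfolding L1[OF m2] L0 by blast
    then have "odd x \<or> odd y \<or> odd z \<or> odd w" using h
      unfolding A xyzw I2_def mcong.simps L2 L3 by blast
    then show "Q e A" unfolding Q_def using A xyzw by blast
  qed
qed

lemma Q_lift:
  assumes "e \<ge> 2" "Q e A"
  shows "Q (e+1) (mm A A)"
proof -
  obtain x y z w where h: "A = M2 (1+2^e*x) (2^e*y) (2^e*z) (1+2^e*w)" "odd x \<or> odd y \<or> odd z \<or> odd w"
    using assms(2) unfolding Q_def by blast
  have ev: "even ((2::nat)^(e-1))" using assms(1) by simp
  have "mm A A = M2 (1+2^(e+1)*(x + 2^(e-1)*(x*x+y*z))) (2^(e+1)*(y*(1+2^(e-1)*(x+w))))
     (2^(e+1)*(z*(1+2^(e-1)*(x+w)))) (1+2^(e+1)*(w+2^(e-1)*(w*w+y*z)))"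
    using sq_form[OF _ h(1)] assms(1) by simp
  moreover have "odd (x + 2^(e-1)*(x*x+y*z)) \<or> odd (y*(1+2^(e-1)*(x+w))) \<or>
      odd (z*(1+2^(e-1)*(x+w))) \<or> odd (w+2^(e-1)*(w*w+y*z))"
    using h(2) ev by auto
  ultimately show ?thesis unfolding Q_def by blast
qed

abbreviation good :: "nat \<Rightarrow> nat \<Rightarrow> nat \<Rightarrow> nat \<Rightarrow> bool" where
  "good p q N n \<equiv> mcong N (powm (Cm p q) n) I2"

lemma good_mult: "good p q N n \<Longrightarrow> good p q N (k*n)"
proof (induction k)
  case 0 then show ?case by (simp add: mcong_refl)
next
  case (Suc k)
  then have "mcong N (mm (powm (Cm p q) n) (powm (Cm p q) (k*n))) (mm I2 I2)"
    by (intro mcong_mm) auto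
  then show ?case by (simp add: powm_add[symmetric] mm_I)
qed

lemma good_sq:
  assumes "e \<ge> 1" "good p q (2^e) n"
  shows "good p q (2^(e+1)) (2*n)"
proof -
  have m2: "(2::nat) \<le> 2^e" using assms by (metis power_one_right power_increasing_iff one_less_numeral_iff semiring_norm(76) )
  obtain a b c d where A: "powm (Cm p q) n = M2 a b c d" by (cases "powm (Cm p q) n") auto
  have "[a = 1] (mod 2^e)" "[b = 0] (mod 2^e)" "[c = 0] (mod 2^e)" "[d = 1] (mod 2^e)"
    using assms(2) by (simp_all add: A I2_def)
  then obtain x y z w where xyzw: "powm (Cm p q) n = M2 (1+2^e*x) (2^e*y) (2^e*z) (1+2^e*w)"
    unfolding L1[OF m2] L0 A by blast
  have "powm (Cm p q) (2*n) = mm (powm (Cm p q) n) (powm (Cm p q) n)"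
    using powm_add[of _ n n] by (simp add: mult_2)
  then show ?thesis using sq_form[OF assms(1) xyzw] form_cong by simp
qed

lemma good2: "good p q 2 6"
proof -
  define B where "B = M2 1 (p mod 2) (q mod 2) (1 + (p mod 2)*(q mod 2))"
  have "mcong 2 (Cm p q) B"
    unfolding Cm_def B_def mcong.simps by (intro conjI cong_add cong_mult cong_refl; simp add: cong_def)
  then have "mcong 2 (powm (Cm p q) 6) (powm B 6)" by (rule mcong_powm)
  moreover have "mcong 2 (powm B 6) I2"
  proof -
    have "p mod 2 = 0 \<or> p mod 2 = 1" "q mod 2 = 0 \<or> q mod 2 = 1" by auto
    have p6: "powm B 6 = mm B (mm B (mm B (mm B (mm B (mm B I2)))))" by (simp add: numeral_eq_Suc)
    show ?thesis unfolding p6 using \<open>p mod 2 = 0 \<or> p mod 2 = 1\<close> \<open>q mod 2 = 0 \<or> q mod 2 = 1\<close>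
      by (elim disjE) (simp_all add: B_def I2_def cong_def)
  qed
  ultimately show ?thesis by (rule mcong_trans)
qed

lemma good_exists: "e \<ge> 1 \<Longrightarrow> good p q (2^e) (6*2^(e-1))"
proof (induction e rule: dec_induct)
  case base then show ?case using good2 by simp
next
  case (step e)
  then have "good p q (2^(e+1)) (2*(6*2^(e-1)))" by (intro good_sq) auto
  moreover have "2*(6*2^(e-1)) = (6*2^(Suc e - 1)::nat)" using step(1)
    by (cases e) auto
  ultimately have "good p q (2^(e+1)) (6*2^(Suc e - 1))" by metis
  then show ?case by simp
qed

lemma period:
  assumes "2 \<le> N" "0 < n0" "good p q N n0"
  shows "0 < cat_period p q N" "good p q N (cat_period p q N)"
    "\<And>m. good p q N m \<Longrightarrow> cat_period p q N dvd m"
proof -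
  have def: "cat_period p q N = (LEAST n. 0 < n \<and> good p q N n)"
    unfolding cat_period_def good_iff[OF assms(1)] ..
  have L: "0 < cat_period p q N \<and> good p q N (cat_period p q N)"
    unfolding def by (rule LeastI[of _ n0]) (use assms in auto)
  then show "0 < cat_period p q N" "good p q N (cat_period p q N)" by auto
  fix m assume gm: "good p q N m"
  define T where "T = cat_period p q N"
  define r where "r = m mod T"
  have m: "m = r + (m div T) * T" unfolding r_def by simp
  have "good p q N ((m div T) * T)" using L good_mult unfolding T_def by blast
  then have "mcong N (mm (powm (Cm p q) r) (powm (Cm p q) ((m div T) * T))) (mm (powm (Cm p q) r) I2)"
    by (intro mcong_mm mcong_refl)
  then have "mcong N (powm (Cm p q) m) (powm (Cm p q) r)"
    by (subst m) (simp add: powm_add mm_I)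
  then have gr: "good p q N r" using gm mcong_sym mcong_trans by blast
  have "r < T" unfolding r_def using L T_def by simp
  show "cat_period p q N dvd m"
  proof (rule ccontr)
    assume "\<not> cat_period p q N dvd m"
    then have "0 < r" unfolding r_def T_def by (simp add: dvd_eq_mod_eq_0)
    then have "\<not> (0 < r \<and> good p q N r)" using \<open>r < T\<close> not_less_Least unfolding T_def def by blast
    then show False using gr \<open>0 < r\<close> by blast
  qed
qed

lemma growth:
  assumes "0 < p" "powm (Cm p q) n = M2 a b c d"
  shows "1 \<le> d \<and> n \<le> b"
  using assms(2)
proof (induction n arbitrary: a b c d)
  case 0 then show ?case by (simp add: I2_def)
next
  case (Suc n)
  obtain a' b' c' d' where h: "powm (Cm p q) n = M2 a' b' c' d'" by (cases "powm (Cm p q) n") auto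
  have "1 \<le> d' \<and> n \<le> b'" using Suc.IH[OF h] .
  moreover have "b = b' + p*d'" "d = q*b' + (1+p*q)*d'" using Suc.prems h by (simp_all add: Cm_def)
  moreover have "p*d' \<ge> 1" using assms(1) calculation(1) by simp
  moreover have "d' \<le> (1+p*q)*d'" by simp
  ultimately show ?case by linarith
qed

lemma nonid:
  assumes "0 < p" "0 < n"
  shows "\<exists>e. \<not> good p q (2^e) n"
proof -
  obtain a b c d where h: "powm (Cm p q) n = M2 a b c d" by (cases "powm (Cm p q) n") auto
  have b: "n \<le> b" using growth[OF assms(1) h] by simp
  have "\<not> good p q (2^b) n"
  proof
    assume "good p q (2^b) n"
    then have "2^b dvd b" by (simp add: h I2_def cong_0_iff)
    moreover have "b < 2^b" by simp
    ultimately show False using b assms(2) by (meson dvd_imp_le not_le less_le_trans)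
  qed
  then show ?thesis by blast
qed


theorem theorem2:
  fixes p q :: nat
  assumes "0 < p" and "0 < q"
  shows "\<exists>e_s::nat. 0 < e_s \<and> (\<forall>e l. e \<ge> e_s \<longrightarrow>
           cat_period p q (2 ^ (e + l)) = 2 ^ l * cat_period p q (2 ^ e))"
proof -
  define n0 where "n0 = cat_period p q (2^2)"
  have g4: "good p q (2^2) (6*2^(2-1))" by (rule good_exists) simp
  have P0: "0 < n0" and G0: "good p q (2^2) n0" and D0: "\<And>m. good p q (2^2) m \<Longrightarrow> n0 dvd m"
    using period[OF _ _ g4] unfolding n0_def by auto
  obtain E where "\<not> good p q (2^E) n0" using nonid[OF assms(1) P0] by blast
  define K where "K = (LEAST e. \<not> good p q (2^e) n0)"
  have nK: "\<not> good p q (2^K) n0" unfolding K_def by (rule LeastI) fact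
  have below: "\<And>e. e < K \<Longrightarrow> good p q (2^e) n0" unfolding K_def using not_less_Least by blast
  have K3: "K > 2"
  proof (rule ccontr)
    assume "\<not> K > 2"
    then have "(2::nat)^K dvd 2^2" by (intro le_imp_power_dvd) simp
    then have "good p q (2^K) n0" using G0 mcong_dvd by blast
    then show False using nK by blast
  qed
  define k where "k = K - 1"
  have k2: "k \<ge> 2" unfolding k_def using K3 by simp
  have "good p q (2^k) n0" using below k_def K3 by simp
  moreover have "\<not> good p q (2^(k+1)) n0" using nK k_def K3 by simp
  ultimately have Qk: "Q k (powm (Cm p q) n0)" using Q_iff k2 by simp
  have Qj: "Q (k+j) (powm (Cm p q) (2^j*n0))" for j
  proof (induction j)
    case 0 then show ?case using Qk by simp
  next
    case (Suc j)
    have "powm (Cm p q) (2^Suc j*n0) = mm (powm (Cm p q) (2^j*n0)) (powm (Cm p q) (2^j*n0))"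
    proof -
      have e: "(2::nat)^Suc j*n0 = 2^j*n0 + 2^j*n0" by simp
      show ?thesis unfolding e by (rule powm_add)
    qed
    then show ?case using Q_lift[OF _ Suc] k2 by simp
  qed
  have Tj: "cat_period p q (2^(k+j)) = 2^j*n0" for j
  proof -
    define N :: nat where "N = 2^(k+j)"
    have "(2::nat)^1 \<le> 2^(k+j)" by (rule power_increasing) (use k2 in auto)
    then have N2: "2 \<le> N" unfolding N_def by simp
    have gj: "good p q N (2^j*n0)" using Qj[of j] Q_iff[of "k+j"] k2 unfolding N_def by simp
    define T where "T = cat_period p q N"
    have T0: "0 < T" and GT: "good p q N T" and DT: "T dvd 2^j*n0"
      using period[OF N2 _ gj] P0 gj unfolding T_def by auto
    have "(2::nat)^2 dvd N" unfolding N_def using k2 by (intro le_imp_power_dvd) simp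
    then have "n0 dvd T" using GT D0 mcong_dvd by blast
    then obtain t where t: "T = n0 * t" by blast
    have "n0 * t dvd n0 * 2^j" using DT t by (simp add: mult.commute)
    then have "t dvd 2^j" using P0 by simp
    then obtain i where i: "i \<le> j" "t = 2^i" using divides_primepow_nat[of 2 t j] by auto
    have "i = j"
    proof (rule ccontr)
      assume "i \<noteq> j"
      then have "k+i+1 \<le> k+j" using i by simp
      then have "(2::nat)^(k+i+1) dvd N" unfolding N_def by (intro le_imp_power_dvd)
      then have "good p q (2^(k+i+1)) (2^i*n0)" using GT t i mcong_dvd by (simp add: mult.commute)
      moreover have "\<not> good p q (2^(k+i+1)) (2^i*n0)" using Qj[of i] Q_iff[of "k+i"] k2 by simp
      ultimately show False by blast
    qed
    then show ?thesis using t i unfolding T_def N_def by simp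
  qed
  show ?thesis
  proof (intro exI conjI allI impI)
    show "0 < k" using k2 by simp
    fix e l :: nat assume "k \<le> e"
    then obtain j where e: "e = k + j" using le_Suc_ex by blast
    have "cat_period p q (2 ^ (e + l)) = 2^(j+l)*n0" using Tj[of "j+l"] e by (simp add: add.assoc)
    also have "\<dots> = 2^l * cat_period p q (2^e)" using Tj[of j] e by (simp add: power_add)
    finally show "cat_period p q (2 ^ (e + l)) = 2 ^ l * cat_period p q (2 ^ e)" .
  qed
qed

end
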